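(* Let $(X,\tau)$ be a Hausdorff extended locally convex space and let $x\in X$ with $x\neq 0_X$. Then there exists a $\tau$-continuous linear functional $f$ on $X$ with $f(x)\neq0$.
   Context: An extended seminorm on a vector space $X$ over $\mathbb{R}$ or $\mathbb{C}$ is a map $\rho:X\to[0,\infty]$ with $\rho(\alpha x)=|\alpha|\rho(x)$ and $\rho(x+y)\le\rho(x)+\rho(y)$. An extended locally convex space $(X,\tau)$ is a vector space with the topology induced by a family $\{\rho_i\}$ of extended seminorms (neighborhood base at $x_0$: $\{x:\max_{i\in J}\rho_i(x-x_0)<\varepsilon\}$, $J$ finite, $\varepsilon>0$). *)

theory Defs
  imports "HOL-Analysis.Analysis"
begin

definition ext_seminorm :: "('k::real_normed_field \<Rightarrow> 'v::ab_group_add \<Rightarrow> 'v) \<Rightarrow> ('v \<Rightarrow> ennreal) \<Rightarrow> bool" where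
  "ext_seminorm sc \<rho> \<longleftrightarrow>
     (\<forall>\<alpha> x. \<rho> (sc \<alpha> x) = ennreal (norm \<alpha>) * \<rho> x) \<and>
     (\<forall>x y. \<rho> (x + y) \<le> \<rho> x + \<rho> y)"

definition elc_nbhd :: "('v::ab_group_add \<Rightarrow> ennreal) set \<Rightarrow> real \<Rightarrow> 'v \<Rightarrow> 'v set" where
  "elc_nbhd J e x0 = {x. \<forall>\<rho>\<in>J. \<rho> (x - x0) < ennreal e}"

definition elc_topology :: "('v::ab_group_add \<Rightarrow> ennreal) set \<Rightarrow> 'v topology" where
  "elc_topology F = topology (\<lambda>U. \<forall>x0\<in>U. \<exists>J e. finite J \<and> J \<subseteq> F \<and> e > 0 \<and> elc_nbhd J e x0 \<subseteq> U)"

definition ext_lcs :: "('k::real_normed_field \<Rightarrow> 'v::ab_group_add \<Rightarrow> 'v) \<Rightarrow> ('v \<Rightarrow> ennreal) set \<Rightarrow> bool" where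
  "ext_lcs sc F \<longleftrightarrow> vector_space sc \<and> (\<forall>\<rho>\<in>F. ext_seminorm sc \<rho>)"

end

theory Submission
  imports Defs
begin


definition lgraph :: "(real \<Rightarrow> 'v::ab_group_add \<Rightarrow> 'v) \<Rightarrow> ('v \<times> real) set \<Rightarrow> bool" where
  "lgraph sc G \<longleftrightarrow> (0,0) \<in> G \<and> (\<forall>u a v b. (u,a)\<in>G \<longrightarrow> (v,b)\<in>G \<longrightarrow> (u+v,a+b)\<in>G)
     \<and> (\<forall>u a r. (u,a)\<in>G \<longrightarrow> (sc r u, r*a) \<in> G) \<and> (\<forall>u a b. (u,a)\<in>G \<longrightarrow> (u,b)\<in>G \<longrightarrow> a = b)"

definition domd :: "'v set \<Rightarrow> ('v \<Rightarrow> real) \<Rightarrow> ('v \<times> real) set \<Rightarrow> bool" where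
  "domd D q G \<longleftrightarrow> (\<forall>v a. (v,a)\<in>G \<longrightarrow> v\<in>D \<longrightarrow> a \<le> q v)"

locale hbs = vector_space sc for sc :: "real \<Rightarrow> 'v::ab_group_add \<Rightarrow> 'v" +
  fixes D :: "'v set" and q :: "'v \<Rightarrow> real"
  assumes D0: "0 \<in> D" and Dadd: "u\<in>D \<Longrightarrow> v\<in>D \<Longrightarrow> u+v \<in> D"
    and Dsc: "u\<in>D \<Longrightarrow> sc r u \<in> D"
    and qadd: "u\<in>D \<Longrightarrow> v\<in>D \<Longrightarrow> q(u+v) \<le> q u + q v"
    and qsc: "u\<in>D \<Longrightarrow> q(sc r u) = \<bar>r\<bar> * q u"
begin

lemma lg_neg: assumes "lgraph sc G" "(u,a)\<in>G" shows "(-u,-a)\<in>G"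
  using assms unfolding lgraph_def by (metis mult_minus1 scale_minus_left scale_one)

lemma lg_add: assumes "lgraph sc G" "(u,a)\<in>G" "(v,b)\<in>G" shows "(u+v,a+b)\<in>G"
  using assms unfolding lgraph_def by blast

lemma lg_sc: assumes "lgraph sc G" "(u,a)\<in>G" shows "(sc r u,r*a)\<in>G"
  using assms unfolding lgraph_def by blast

lemma lg_fun: assumes "lgraph sc G" "(u,a)\<in>G" "(u,b)\<in>G" shows "a = b"
  using assms unfolding lgraph_def by blast

lemma lg_diff: assumes "lgraph sc G" "(u,a)\<in>G" "(v,b)\<in>G" shows "(u-v,a-b)\<in>G"
  using lg_add[OF assms(1,2) lg_neg[OF assms(1,3)]] by simp

lemma Dneg: "u \<in> D \<Longrightarrow> -u \<in> D"
  by (metis Dsc scale_minus_left scale_one)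

lemma Ddiff: "u \<in> D \<Longrightarrow> v \<in> D \<Longrightarrow> u - v \<in> D"
  by (metis Dadd Dneg diff_conv_add_uminus)

lemma ext_step:
  assumes M: "lgraph sc M" "domd D q M" and y: "y \<notin> fst ` M"
  shows "\<exists>c. lgraph sc {(m + sc t y, a + t*c) | m a t. (m,a)\<in>M}
           \<and> domd D q {(m + sc t y, a + t*c) | m a t. (m,a)\<in>M}"
proof -
  define A where "A = {a - q(m - y) | m a. (m,a)\<in>M \<and> m - y \<in> D}"
  define B where "B = {q(m + y) - a | m a. (m,a)\<in>M \<and> m + y \<in> D}"
  have AB: "\<alpha> \<le> \<beta>" if hA: "\<alpha> \<in> A" and hB: "\<beta> \<in> B" for \<alpha> \<beta>
  proof -
    obtain m1 a1 where 1: "\<alpha> = a1 - q(m1 - y)" "(m1,a1)\<in>M" "m1 - y \<in> D" using hA A_def by blast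
    obtain m2 a2 where 2: "\<beta> = q(m2 + y) - a2" "(m2,a2)\<in>M" "m2 + y \<in> D" using hB B_def by blast
    have e: "m1 + m2 = (m1 - y) + (m2 + y)" by simp
    have "(m1+m2, a1+a2) \<in> M" using lg_add[OF M(1) 1(2) 2(2)] .
    moreover have "m1 + m2 \<in> D" using e Dadd 1(3) 2(3) by metis
    ultimately have "a1 + a2 \<le> q(m1+m2)" using M(2) unfolding domd_def by blast
    also have "\<dots> \<le> q(m1 - y) + q(m2 + y)" using e qadd 1(3) 2(3) by metis
    finally show ?thesis using 1 2 by simp
  qed
  have AneB: "A \<noteq> {} \<longleftrightarrow> B \<noteq> {}"
  proof
    assume "A \<noteq> {}"
    then obtain m a where "(m,a)\<in>M" "m - y \<in> D" using A_def by blast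
    then have "(-m,-a)\<in>M" "-m + y \<in> D" using lg_neg[OF M(1)] Dneg[of "m - y"] by auto
    then show "B \<noteq> {}" using B_def by blast
  next
    assume "B \<noteq> {}"
    then obtain m a where "(m,a)\<in>M" "m + y \<in> D" using B_def by blast
    then have "(-m,-a)\<in>M" "-m - y \<in> D" using lg_neg[OF M(1)] Dneg[of "m + y"] by auto
    then show "A \<noteq> {}" using A_def by blast
  qed
  define c where "c = (if A = {} then 0 else Sup A)"
  have cA: "\<alpha> \<le> c" if "\<alpha> \<in> A" for \<alpha>
  proof -
    from that AneB obtain \<beta> where "\<beta> \<in> B" by blast
    then have "bdd_above A" using AB by (auto simp: bdd_above_def)
    then show ?thesis using that c_def by (auto intro: cSup_upper)
  qed
  have cB: "c \<le> \<beta>" if "\<beta> \<in> B" for \<beta>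
  proof -
    from that AneB have "A \<noteq> {}" by blast
    then show ?thesis using c_def AB that by (auto intro: cSup_least)
  qed
  define G where "G = {(m + sc t y, a + t*c) | m a t. (m,a)\<in>M}"
  have "lgraph sc G"
    unfolding lgraph_def
  proof (intro conjI allI impI)
    show "(0,0) \<in> G" unfolding G_def using M(1) unfolding lgraph_def
      by (auto intro!: exI[of _ 0])
  next
    fix u a v b assume "(u,a)\<in>G" "(v,b)\<in>G"
    then obtain m1 a1 t1 m2 a2 t2 where "u = m1 + sc t1 y" "a = a1 + t1*c" "(m1,a1)\<in>M"
      "v = m2 + sc t2 y" "b = a2 + t2*c" "(m2,a2)\<in>M" unfolding G_def by blast
    moreover have "(m1+m2,a1+a2)\<in>M" using lg_add M(1) calculation by blast
    moreover have "u + v = (m1+m2) + sc (t1+t2) y" "a+b = (a1+a2) + (t1+t2)*c"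
      using calculation by (auto simp: scale_left_distrib algebra_simps)
    ultimately show "(u+v,a+b)\<in>G" unfolding G_def by blast
  next
    fix u a r assume "(u,a)\<in>G"
    then obtain m1 a1 t1 where "u = m1 + sc t1 y" "a = a1 + t1*c" "(m1,a1)\<in>M" unfolding G_def by blast
    moreover have "(sc r m1, r*a1)\<in>M" using lg_sc M(1) calculation by blast
    moreover have "sc r u = sc r m1 + sc (r*t1) y" "r*a = r*a1 + (r*t1)*c"
      using calculation by (auto simp: scale_right_distrib algebra_simps)
    ultimately show "(sc r u, r*a)\<in>G" unfolding G_def by blast
  next
    fix u a b assume "(u,a)\<in>G" "(u,b)\<in>G"
    then obtain m1 a1 t1 m2 a2 t2 where 1: "u = m1 + sc t1 y" "a = a1 + t1*c" "(m1,a1)\<in>M"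
      "u = m2 + sc t2 y" "b = a2 + t2*c" "(m2,a2)\<in>M" unfolding G_def by blast
    have d: "(m2 - m1, a2 - a1) \<in> M" using lg_diff[OF M(1) 1(6) 1(3)] .
    have t: "t1 = t2"
    proof (rule ccontr)
      assume ne: "t1 \<noteq> t2"
      have "sc (t1 - t2) y = m2 - m1" using 1(1,4)
        by (simp add: scale_left_diff_distrib algebra_simps)
      then have "sc (1/(t1-t2)) (m2 - m1) = y" using ne by (metis scale_scale scale_one divide_self_if times_divide_eq_left
         div_by_1 nonzero_divide_mult_cancel_left right_minus_eq mult_1 ) 
      then have "(y, (1/(t1-t2)) * (a2 - a1)) \<in> M" using lg_sc[OF M(1) d] by metis
      then show False using y by force
    qed
    then have "m1 = m2" using 1 by simp
    then have "a1 = a2" using lg_fun[OF M(1)] 1 by blast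
    then show "a = b" using 1 t by simp
  qed
  moreover have "domd D q G"
    unfolding domd_def
  proof (intro allI impI)
    fix v b assume "(v,b)\<in>G" and vD: "v \<in> D"
    then obtain m a t where ob: "v = m + sc t y" "b = a + t*c" "(m,a)\<in>M" unfolding G_def by blast
    consider "t = 0" | "t > 0" | "t < 0" by linarith
    then show "b \<le> q v"
    proof cases
      case 1
      then show ?thesis using \<open>t = 0\<close> M(2) vD ob unfolding domd_def by auto
    next
      case 2
      define m' where "m' = sc (1/t) m"
      have mM: "(m', a/t) \<in> M" using lg_sc[OF M(1) ob(3), of "1/t"] m'_def by simp
      have e: "sc (1/t) v = m' + y" using 2 ob m'_def by (simp add: scale_right_distrib)
      have D': "m' + y \<in> D" using Dsc[OF vD] e by metis
      have "q(m'+y) - a/t \<in> B" using B_def mM D' by blast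
      then have "c \<le> q(m'+y) - a/t" using cB by blast
      moreover have "v = sc t (m' + y)" using 2 ob m'_def by (simp add: scale_right_distrib)
      ultimately have "q v = t * q(m'+y)" "c \<le> q(m'+y) - a/t" using qsc[OF D'] 2 by auto
      then have "t*c \<le> t*(q(m'+y) - a/t)" using 2 by (intro mult_left_mono) auto
      also have "\<dots> = t * q(m'+y) - a" using 2 by (simp add: field_simps)
      finally show ?thesis using ob \<open>q v = t * q(m'+y)\<close> by linarith
    next
      case 3
      define s where "s = - t"
      have s: "s > 0" using 3 s_def by simp
      define m' where "m' = sc (1/s) m"
      have mM: "(m', a/s) \<in> M" using lg_sc[OF M(1) ob(3), of "1/s"] m'_def by simp
      have e: "sc (1/s) v = m' - y" using s ob m'_def s_def by (simp add: scale_right_distrib)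
      have D': "m' - y \<in> D" using Dsc[OF vD] e by metis
      have "a/s - q(m'-y) \<in> A" using A_def mM D' by blast
      then have "a/s - q(m'-y) \<le> c" using cA by blast
      moreover have "v = sc s (m' - y)" using s ob m'_def s_def by (simp add: scale_right_diff_distrib)
      ultimately have "q v = s * q(m'-y)" "a/s - q(m'-y) \<le> c" using qsc[OF D'] s by auto
      then have "s*(a/s - q(m'-y)) \<le> s*c" using s by (intro mult_left_mono) auto
      moreover have "s*(a/s - q(m'-y)) = a - s * q(m'-y)" using s by (simp add: field_simps)
      moreover have "t*c = - (s*c)" using s_def by simp
      ultimately show ?thesis using ob \<open>q v = s * q(m'-y)\<close> by linarith
    qed
  qed
  ultimately show ?thesis unfolding G_def by blast
qed

lemma hb_real:
  assumes x: "x \<noteq> 0" and x0: "\<forall>t. sc t x \<in> D \<longrightarrow> t*c0 \<le> q (sc t x)"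
  shows "\<exists>f. Vector_Spaces.linear sc (*) f \<and> f x = c0 \<and> (\<forall>v\<in>D. f v \<le> q v)"
proof -
  define G0 where "G0 = {(sc t x, t*c0) | t. True}"
  have G0l: "lgraph sc G0" unfolding lgraph_def G0_def
  proof (intro conjI allI impI)
    show "(0,0) \<in> {(sc t x, t*c0) | t. True}" by (auto intro!: exI[of _ 0])
  next
    fix u a v b assume "(u,a) \<in> {(sc t x, t*c0) | t. True}" "(v,b) \<in> {(sc t x, t*c0) | t. True}"
    then obtain t1 t2 where "u = sc t1 x" "a = t1*c0" "v = sc t2 x" "b = t2*c0" by blast
    then show "(u+v,a+b) \<in> {(sc t x, t*c0) | t. True}"
      by (auto intro!: exI[of _ "t1+t2"] simp: scale_left_distrib algebra_simps)
  next
    fix u a r assume "(u,a) \<in> {(sc t x, t*c0) | t. True}"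
    then obtain t1 where "u = sc t1 x" "a = t1*c0" by blast
    then show "(sc r u,r*a) \<in> {(sc t x, t*c0) | t. True}"
      by (auto intro!: exI[of _ "r*t1"])
  next
    fix u a b assume "(u,a) \<in> {(sc t x, t*c0) | t. True}" "(u,b) \<in> {(sc t x, t*c0) | t. True}"
    then obtain t1 t2 where "u = sc t1 x" "a = t1*c0" "u = sc t2 x" "b = t2*c0" by blast
    then show "a = b" using x by auto
  qed
  have G0d: "domd D q G0" unfolding domd_def G0_def using x0 by auto
  define S where "S = {G. lgraph sc G \<and> domd D q G \<and> G0 \<subseteq> G}"
  have "\<forall>C\<in>chains S. \<exists>U\<in>S. \<forall>X\<in>C. X \<subseteq> U"
  proof
    fix C assume C: "C \<in> chains S"
    show "\<exists>U\<in>S. \<forall>X\<in>C. X \<subseteq> U"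
    proof (cases "C = {}")
      case True
      then show ?thesis using G0l G0d S_def by auto
    next
      case False
      have CS: "C \<subseteq> S" and ch: "\<forall>X\<in>C. \<forall>Y\<in>C. X \<subseteq> Y \<or> Y \<subseteq> X"
        using C unfolding chains_def chain_subset_def by auto
      have "lgraph sc (\<Union>C)" unfolding lgraph_def
      proof (intro conjI allI impI)
        obtain X where "X \<in> C" using False by blast
        then have "lgraph sc X" using CS S_def by blast
        then have "(0,0) \<in> X" unfolding lgraph_def by blast
        then show "(0,0) \<in> \<Union>C" using \<open>X \<in> C\<close> by blast
      next
        fix u a v b assume "(u,a) \<in> \<Union>C" "(v,b) \<in> \<Union>C"
        then obtain X Y where "X\<in>C" "Y\<in>C" "(u,a)\<in>X" "(v,b)\<in>Y" by blast
        then have "(u,a)\<in>X \<and> (v,b)\<in>X \<and> X \<in> C \<or> (u,a)\<in>Y \<and> (v,b)\<in>Y \<and> Y \<in> C" using ch by blast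
        then show "(u+v,a+b) \<in> \<Union>C" using CS S_def lg_add by blast
      next
        fix u a r assume "(u,a) \<in> \<Union>C"
        then obtain X where "X\<in>C" "(u,a)\<in>X" by blast
        then show "(sc r u,r*a) \<in> \<Union>C" using CS S_def lg_sc by blast
      next
        fix u a b assume "(u,a) \<in> \<Union>C" "(u,b) \<in> \<Union>C"
        then obtain X Y where "X\<in>C" "Y\<in>C" "(u,a)\<in>X" "(u,b)\<in>Y" by blast
        then have "(u,a)\<in>X \<and> (u,b)\<in>X \<and> X \<in> C \<or> (u,a)\<in>Y \<and> (u,b)\<in>Y \<and> Y \<in> C" using ch by blast
        then show "a = b" using CS S_def lg_fun by blast
      qed
      moreover have "domd D q (\<Union>C)" using CS S_def unfolding domd_def by blast
      moreover have "G0 \<subseteq> \<Union>C" using CS S_def False by blast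
      ultimately show ?thesis using S_def by blast
    qed
  qed
  from Zorn_Lemma2[OF this] obtain Mx where Mx: "Mx \<in> S" and mx: "\<forall>X\<in>S. Mx \<subseteq> X \<longrightarrow> X = Mx"
    by blast
  have Ml: "lgraph sc Mx" "domd D q Mx" "G0 \<subseteq> Mx" using Mx S_def by auto
  have tot: "\<exists>a. (v,a) \<in> Mx" for v
  proof (rule ccontr)
    assume na: "\<nexists>a. (v,a) \<in> Mx"
    have "v \<notin> fst ` Mx"
    proof
      assume "v \<in> fst ` Mx"
      then obtain p where "p \<in> Mx" "v = fst p" by blast
      then have "(v, snd p) \<in> Mx" by simp
      then show False using na by blast
    qed
    from ext_step[OF Ml(1,2) this] obtain c where
      c: "lgraph sc {(m + sc t v, a + t*c) | m a t. (m,a)\<in>Mx}"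
         "domd D q {(m + sc t v, a + t*c) | m a t. (m,a)\<in>Mx}" by blast
    define Gv where "Gv = {(m + sc t v, a + t*c) | m a t. (m,a)\<in>Mx}"
    have sub: "Mx \<subseteq> Gv"
    proof
      fix p assume "p \<in> Mx"
      then show "p \<in> Gv" unfolding Gv_def
        by (intro CollectI exI[of _ "fst p"] exI[of _ "snd p"] exI[of _ 0]) auto
    qed
    have "G0 \<subseteq> Gv" using Ml(3) sub by (rule subset_trans)
    then have GS: "Gv \<in> S" using c unfolding S_def Gv_def by blast
    have eq: "Gv = Mx" using mx GS sub by blast
    have "(0,0) \<in> Mx" using Ml(1) unfolding lgraph_def by blast
    then have "(0 + sc 1 v, 0 + 1*c) \<in> Gv" unfolding Gv_def
      by (intro CollectI exI[of _ 0] exI[of _ "0::real"] exI[of _ "1::real"]) simp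
    then have "(0 + sc 1 v, 0 + 1*c) \<in> Mx" unfolding eq .
    then have "(v, c) \<in> Mx" by simp
    then show False using na by blast
  qed
  define f where "f v = (THE a. (v,a) \<in> Mx)" for v
  have fM: "(v, f v) \<in> Mx" for v
  proof -
    have "\<exists>!a. (v,a) \<in> Mx" using tot[of v] lg_fun[OF Ml(1)] by blast
    then show ?thesis unfolding f_def by (rule theI')
  qed
  have fe: "(v, a) \<in> Mx \<Longrightarrow> f v = a" for v a using fM lg_fun[OF Ml(1)] by blast
  have "Vector_Spaces.linear sc (*) f"
    unfolding Vector_Spaces.linear_iff
  proof (intro conjI allI)
    show "vector_space sc" by unfold_locales
    show "vector_space ((*) :: real \<Rightarrow> real \<Rightarrow> real)"
      by unfold_locales (auto simp: algebra_simps)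
    show "f (u + v) = f u + f v" for u v using fe lg_add[OF Ml(1) fM fM] by blast
    show "f (sc r u) = r * f u" for r u using fe lg_sc[OF Ml(1) fM] by blast
  qed
  moreover have "f x = c0"
  proof -
    have "(sc 1 x, 1*c0) \<in> G0" unfolding G0_def by blast
    then have "(x, c0) \<in> Mx" using Ml(3) by auto
    then show ?thesis using fe by blast
  qed
  moreover have "\<forall>v\<in>D. f v \<le> q v" using fM Ml(2) unfolding domd_def by blast
  ultimately show ?thesis by blast
qed

end





lemma nbhd_mono:
  assumes "J' \<subseteq> J" "e \<le> e0"
  shows "elc_nbhd J e x \<subseteq> elc_nbhd J' e0 x"
proof
  fix z assume "z \<in> elc_nbhd J e x"
  then have a: "\<forall>\<rho>\<in>J. \<rho> (z - x) < ennreal e" unfolding elc_nbhd_def by simp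
  have "ennreal e \<le> ennreal e0" using assms(2) by (rule ennreal_leI)
  then have "\<forall>\<rho>\<in>J'. \<rho> (z - x) < ennreal e0"
  proof (intro ballI)
    fix \<rho> assume "\<rho> \<in> J'"
    then have "\<rho> (z - x) < ennreal e" using a assms(1) by blast
    then show "\<rho> (z - x) < ennreal e0" using \<open>ennreal e \<le> ennreal e0\<close> by (rule less_le_trans)
  qed
  then show "z \<in> elc_nbhd J' e0 x" unfolding elc_nbhd_def by simp
qed

lemma elc_istop: "istopology (\<lambda>U. \<forall>x0\<in>U. \<exists>J e. finite J \<and> J \<subseteq> F \<and> e > 0 \<and> elc_nbhd J e x0 \<subseteq> U)"
  unfolding istopology_def
proof (intro conjI allI impI)
  fix S T :: "'a set"
  assume S: "\<forall>x0\<in>S. \<exists>J e. finite J \<and> J \<subseteq> F \<and> e > 0 \<and> elc_nbhd J e x0 \<subseteq> S"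
    and T: "\<forall>x0\<in>T. \<exists>J e. finite J \<and> J \<subseteq> F \<and> e > 0 \<and> elc_nbhd J e x0 \<subseteq> T"
  show "\<forall>x0\<in>S \<inter> T. \<exists>J e. finite J \<and> J \<subseteq> F \<and> e > 0 \<and> elc_nbhd J e x0 \<subseteq> S \<inter> T"
  proof (intro ballI)
    fix x0 assume x0: "x0 \<in> S \<inter> T"
    have xS: "x0 \<in> S" and xT: "x0 \<in> T" using x0 by auto
    obtain J1 e1 where 1: "finite J1" "J1 \<subseteq> F" "e1 > 0" "elc_nbhd J1 e1 x0 \<subseteq> S"
      using bspec[OF S xS] by iprover
    obtain J2 e2 where 2: "finite J2" "J2 \<subseteq> F" "e2 > 0" "elc_nbhd J2 e2 x0 \<subseteq> T"
      using bspec[OF T xT] by iprover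
    have s1: "elc_nbhd (J1 \<union> J2) (min e1 e2) x0 \<subseteq> elc_nbhd J1 e1 x0"
      by (rule nbhd_mono) auto
    have s2: "elc_nbhd (J1 \<union> J2) (min e1 e2) x0 \<subseteq> elc_nbhd J2 e2 x0"
      by (rule nbhd_mono) auto
    have f: "finite (J1 \<union> J2)" using 1(1) 2(1) by simp
    have g: "J1 \<union> J2 \<subseteq> F" using 1(2) 2(2) by (rule Un_least)
    have h: "min e1 e2 > 0" using 1(3) 2(3) by simp
    have "elc_nbhd (J1 \<union> J2) (min e1 e2) x0 \<subseteq> S" using s1 1(4) by (rule subset_trans)
    moreover have "elc_nbhd (J1 \<union> J2) (min e1 e2) x0 \<subseteq> T" using s2 2(4) by (rule subset_trans)
    ultimately have "elc_nbhd (J1 \<union> J2) (min e1 e2) x0 \<subseteq> S \<inter> T" by (rule Int_greatest)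
    with f g h show "\<exists>J e. finite J \<and> J \<subseteq> F \<and> e > 0 \<and> elc_nbhd J e x0 \<subseteq> S \<inter> T" by (intro exI conjI)
  qed
next
  fix K :: "'a set set"
  assume K: "\<forall>S\<in>K. \<forall>x0\<in>S. \<exists>J e. finite J \<and> J \<subseteq> F \<and> e > 0 \<and> elc_nbhd J e x0 \<subseteq> S"
  show "\<forall>x0\<in>\<Union>K. \<exists>J e. finite J \<and> J \<subseteq> F \<and> e > 0 \<and> elc_nbhd J e x0 \<subseteq> \<Union>K"
  proof (intro ballI)
    fix x0 assume "x0 \<in> \<Union>K"
    then obtain S where SK: "S \<in> K" and xS: "x0 \<in> S" by (rule UnionE)
    obtain J e where J: "finite J" "J \<subseteq> F" "e > 0" "elc_nbhd J e x0 \<subseteq> S"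
      using bspec[OF bspec[OF K SK] xS] by iprover
    have "S \<subseteq> \<Union>K" using SK by (rule Union_upper)
    with J(4) have "elc_nbhd J e x0 \<subseteq> \<Union>K" by (rule subset_trans)
    with J(1-3) show "\<exists>J e. finite J \<and> J \<subseteq> F \<and> e > 0 \<and> elc_nbhd J e x0 \<subseteq> \<Union>K" by (intro exI conjI)
  qed
qed

lemma elc_open: "openin (elc_topology F) U \<longleftrightarrow>
   (\<forall>x0\<in>U. \<exists>J e. finite J \<and> J \<subseteq> F \<and> e > 0 \<and> elc_nbhd J e x0 \<subseteq> U)"
  unfolding elc_topology_def using elc_istop[of F] by (simp add: topology_inverse')

lemma elc_topspace: "topspace (elc_topology F) = UNIV"
proof -
  have "openin (elc_topology F) UNIV" unfolding elc_open
    by (intro ballI exI[of _ "{}"] exI[of _ "1::real"]) auto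
  then show ?thesis by (simp add: openin_subset subset_antisym)
qed

lemma elc_hausd:
  fixes x :: "'v::ab_group_add"
  assumes "Hausdorff_space (elc_topology F)" "x \<noteq> 0"
  shows "\<exists>\<rho>\<in>F. \<rho> x \<noteq> 0"
proof (rule ccontr)
  assume no: "\<not> (\<exists>\<rho>\<in>F. \<rho> x \<noteq> 0)"
  obtain U V where UV: "openin (elc_topology F) U" "openin (elc_topology F) V" "x \<in> U" "0 \<in> V" "disjnt U V"
    using assms unfolding Hausdorff_space_def elc_topspace by blast
  obtain J e where "J \<subseteq> F" "e > 0" "elc_nbhd J e 0 \<subseteq> V" using UV(2,4) unfolding elc_open by blast
  moreover have "x \<in> elc_nbhd J e 0" unfolding elc_nbhd_def
  proof (intro CollectI ballI)
    fix \<rho> assume "\<rho> \<in> J"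
    then have "\<rho> x = 0" using no \<open>J \<subseteq> F\<close> by blast
    moreover have "0 < ennreal e" using \<open>e > 0\<close> by (simp add: ennreal_less_zero_iff)
    ultimately show "\<rho> (x - 0) < ennreal e" by simp
  qed
  ultimately have "x \<in> V" by blast
  then show False using UV(3,5) by (auto simp: disjnt_def)
qed

lemma elc_cont:
  fixes f :: "'v::ab_group_add \<Rightarrow> 'b::real_normed_vector"
  assumes \<rho>: "\<rho> \<in> F" and fd: "\<And>z y. f (z - y) = f z - f y" and C: "C > 0"
    and bd: "\<And>w. \<rho> w \<noteq> top \<Longrightarrow> norm (f w) \<le> C * enn2real (\<rho> w)"
  shows "continuous_map (elc_topology F) euclidean f"
  unfolding continuous_map elc_topspace
proof (intro conjI allI impI)
  fix U :: "'b set" assume "openin euclidean U"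
  then have oU: "open U" by simp
  show "openin (elc_topology F) {x \<in> UNIV. f x \<in> U}" unfolding elc_open
  proof
    fix y assume "y \<in> {x \<in> UNIV. f x \<in> U}"
    then obtain \<epsilon> where \<epsilon>: "\<epsilon> > 0" "ball (f y) \<epsilon> \<subseteq> U" using oU open_contains_ball by blast
    have "elc_nbhd {\<rho>} (\<epsilon>/C) y \<subseteq> {x \<in> UNIV. f x \<in> U}"
    proof
      fix z assume "z \<in> elc_nbhd {\<rho>} (\<epsilon>/C) y"
      then have lt: "\<rho> (z - y) < ennreal (\<epsilon>/C)" unfolding elc_nbhd_def by auto
      have lt2: "\<rho> (z - y) < top" using lt ennreal_less_top order.strict_trans by blast
      then have fin: "\<rho> (z - y) \<noteq> top" by simp
      have "enn2real (\<rho> (z - y)) < \<epsilon>/C" using lt lt2 by simp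
      then have "C * enn2real (\<rho> (z - y)) < \<epsilon>" using C by (simp add: field_simps)
      then have "norm (f z - f y) < \<epsilon>" using bd[OF fin] fd[of z y] by simp
      then have "f z \<in> ball (f y) \<epsilon>" by (simp add: dist_norm norm_minus_commute)
      then show "z \<in> {x \<in> UNIV. f x \<in> U}" using \<epsilon>(2) by blast
    qed
    then show "\<exists>J e. finite J \<and> J \<subseteq> F \<and> e > 0 \<and> elc_nbhd J e y \<subseteq> {x \<in> UNIV. f x \<in> U}"
      using \<rho> \<epsilon>(1) C by (intro exI[of _ "{\<rho>}"] exI[of _ "\<epsilon>/C"]) auto
  qed
qed auto



lemma hbs_from:
  fixes s :: "real \<Rightarrow> 'v::ab_group_add \<Rightarrow> 'v"
  assumes vs: "vector_space s" and h: "\<And>r v. \<rho> (s r v) = ennreal \<bar>r\<bar> * \<rho> v"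
    and tri: "\<And>x y. \<rho> (x + y) \<le> \<rho> x + \<rho> y"
  shows "hbs s {v. \<rho> v \<noteq> top} (\<lambda>v. enn2real (\<rho> v))"
  unfolding hbs_def hbs_axioms_def
proof (intro conjI allI impI vs)
  interpret V: vector_space s by (rule vs)
  have "\<rho> 0 = \<rho> (s 0 0)" by simp
  also have "\<dots> = 0" using h[of 0 0] by simp
  finally show "0 \<in> {v. \<rho> v \<noteq> top}" by simp
next
  fix u v assume "u \<in> {v. \<rho> v \<noteq> top}" "v \<in> {v. \<rho> v \<noteq> top}"
  then have u: "\<rho> u < top" and v: "\<rho> v < top" by (simp_all add: less_top[symmetric])
  then have s: "\<rho> u + \<rho> v < top" by simp
  have lt: "\<rho> (u+v) < top" using tri[of u v] s by (rule le_less_trans)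
  then show "u + v \<in> {v. \<rho> v \<noteq> top}" by simp
  have "enn2real (\<rho> (u+v)) \<le> enn2real (\<rho> u + \<rho> v)" using tri[of u v] s by (rule enn2real_mono)
  also have "\<dots> = enn2real (\<rho> u) + enn2real (\<rho> v)" using u v by (rule enn2real_plus)
  finally show "enn2real (\<rho> (u+v)) \<le> enn2real (\<rho> u) + enn2real (\<rho> v)" .
next
  fix u r assume "u \<in> {v. \<rho> v \<noteq> top}"
  then have u: "\<rho> u \<noteq> top" by simp
  then show "s r u \<in> {v. \<rho> v \<noteq> top}" using h by (simp add: ennreal_mult_eq_top_iff)
  show "enn2real (\<rho> (s r u)) = \<bar>r\<bar> * enn2real (\<rho> u)" using h by (simp add: enn2real_mult)
qed

lemma core:
  fixes s :: "real \<Rightarrow> 'v::ab_group_add \<Rightarrow> 'v"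
  assumes vs: "vector_space s" and h: "\<And>r v. \<rho> (s r v) = ennreal \<bar>r\<bar> * \<rho> v"
    and tri: "\<And>x y. \<rho> (x + y) \<le> \<rho> x + \<rho> y" and x: "x \<noteq> 0" and rx: "\<rho> x \<noteq> 0"
  shows "\<exists>g. Vector_Spaces.linear s (*) g \<and> g x \<noteq> 0 \<and> (\<forall>w. \<rho> w \<noteq> top \<longrightarrow> \<bar>g w\<bar> \<le> enn2real (\<rho> w))"
proof -
  interpret hbs s "{v. \<rho> v \<noteq> top}" "\<lambda>v. enn2real (\<rho> v)" using hbs_from[OF vs h tri] .
  define c0 where "c0 = (if \<rho> x = top then 1 else enn2real (\<rho> x))"
  have c0: "c0 \<noteq> 0" using rx unfolding c0_def by (auto simp: enn2real_eq_0_iff)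
  have "\<forall>t. s t x \<in> {v. \<rho> v \<noteq> top} \<longrightarrow> t*c0 \<le> enn2real (\<rho> (s t x))"
  proof (intro allI impI)
    fix t assume "s t x \<in> {v. \<rho> v \<noteq> top}"
    then have fin: "ennreal \<bar>t\<bar> * \<rho> x \<noteq> top" using h by simp
    show "t*c0 \<le> enn2real (\<rho> (s t x))"
    proof (cases "\<rho> x = top")
      case True
      then have "t = 0" using fin by (auto simp: ennreal_mult_eq_top_iff)
      then show ?thesis by simp
    next
      case False
      then have "enn2real (\<rho> (s t x)) = \<bar>t\<bar> * enn2real (\<rho> x)" using h by (simp add: enn2real_mult)
      moreover have "t * enn2real (\<rho> x) \<le> \<bar>t\<bar> * enn2real (\<rho> x)"
        by (intro mult_right_mono) auto
      ultimately show ?thesis using False c0_def by simp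
    qed
  qed
  from hb_real[OF x this] obtain g where g: "Vector_Spaces.linear s (*) g" "g x = c0"
    "\<forall>v\<in>{v. \<rho> v \<noteq> top}. g v \<le> enn2real (\<rho> v)" by blast
  have "\<bar>g w\<bar> \<le> enn2real (\<rho> w)" if w: "\<rho> w \<noteq> top" for w
  proof -
    have m: "s (-1) w = - w" by (metis scale_minus_left scale_one)
    have r: "\<rho> (- w) = \<rho> w" using h[of "-1" w] m by simp
    have "\<forall>c x. g (s c x) = c * g x" using g(1) unfolding Vector_Spaces.linear_iff by blast
    then have "g (s (-1) w) = (-1) * g w" by blast
    then have "g (s (-1) w) = - g w" by simp
    then have "g (-w) = - g w" using m by simp
    then show ?thesis using g(3) w r by (smt (verit) mem_Collect_eq)
  qed
  then show ?thesis using g c0 by blast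
qed



lemma real_part:
  fixes sc :: "real \<Rightarrow> 'v::ab_group_add \<Rightarrow> 'v"
  assumes "ext_lcs sc F" "Hausdorff_space (elc_topology F)" "x \<noteq> 0"
  shows "\<exists>f. Vector_Spaces.linear sc (*) f \<and> continuous_map (elc_topology F) euclidean f \<and> f x \<noteq> 0"
proof -
  obtain \<rho> where \<rho>: "\<rho> \<in> F" "\<rho> x \<noteq> 0" using elc_hausd assms(2,3) by blast
  have vs: "vector_space sc" and es: "ext_seminorm sc \<rho>" using assms(1) \<rho> unfolding ext_lcs_def by auto
  have h: "\<And>r v. \<rho> (sc r v) = ennreal \<bar>r\<bar> * \<rho> v" and tri: "\<And>x y. \<rho> (x + y) \<le> \<rho> x + \<rho> y"
    using es unfolding ext_seminorm_def by auto
  obtain g where g: "Vector_Spaces.linear sc (*) g" "g x \<noteq> 0"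
    "\<forall>w. \<rho> w \<noteq> top \<longrightarrow> \<bar>g w\<bar> \<le> enn2real (\<rho> w)" using core[OF vs h tri assms(3) \<rho>(2)] by blast
  have "continuous_map (elc_topology F) euclidean g"
  proof (rule elc_cont[OF \<rho>(1), of g 1])
    show "g (z - y) = g z - g y" for z y
      using g(1) unfolding Vector_Spaces.linear_iff by (metis add_diff_cancel diff_add_cancel)
    show "norm (g w) \<le> 1 * enn2real (\<rho> w)" if "\<rho> w \<noteq> top" for w using g(3) that by simp
  qed simp
  then show ?thesis using g by blast
qed

lemma complex_part:
  fixes sc :: "complex \<Rightarrow> 'v::ab_group_add \<Rightarrow> 'v"
  assumes "ext_lcs sc F" "Hausdorff_space (elc_topology F)" "x \<noteq> 0"
  shows "\<exists>f. Vector_Spaces.linear sc (*) f \<and> continuous_map (elc_topology F) euclidean f \<and> f x \<noteq> 0"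
proof -
  obtain \<rho> where \<rho>: "\<rho> \<in> F" "\<rho> x \<noteq> 0" using elc_hausd assms(2,3) by blast
  have vs: "vector_space sc" and es: "ext_seminorm sc \<rho>" using assms(1) \<rho> unfolding ext_lcs_def by auto
  interpret V: vector_space sc by (rule vs)
  have hc: "\<And>r v. \<rho> (sc r v) = ennreal (norm r) * \<rho> v" and tri: "\<And>x y. \<rho> (x + y) \<le> \<rho> x + \<rho> y"
    using es unfolding ext_seminorm_def by auto
  define s where "s r v = sc (of_real r) v" for r v
  have vsr: "vector_space s" unfolding vector_space_def s_def
    by (simp add: V.scale_right_distrib V.scale_left_distrib)
  have h: "\<And>r v. \<rho> (s r v) = ennreal \<bar>r\<bar> * \<rho> v" using hc s_def by simp
  obtain g where g: "Vector_Spaces.linear s (*) g" "g x \<noteq> 0"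
    "\<forall>w. \<rho> w \<noteq> top \<longrightarrow> \<bar>g w\<bar> \<le> enn2real (\<rho> w)" using core[OF vsr h tri assms(3) \<rho>(2)] by blast
  have gadd: "g (u + v) = g u + g v" for u v using g(1) unfolding Vector_Spaces.linear_iff by blast
  have gsc: "g (sc (of_real r) v) = r * g v" for r v using g(1) unfolding Vector_Spaces.linear_iff s_def by blast
  define f where "f v = complex_of_real (g v) - \<i> * complex_of_real (g (sc \<i> v))" for v
  have fadd: "f (u + v) = f u + f v" for u v unfolding f_def by (simp add: gadd V.scale_right_distrib algebra_simps)
  have fr: "f (sc (of_real r) v) = of_real r * f v" for r v
  proof -
    have eq: "sc \<i> (sc (of_real r) v) = sc (of_real r) (sc \<i> v)" by (simp add: mult.commute)
    have e1: "g (sc \<i> (sc (of_real r) v)) = r * g (sc \<i> v)" by (subst eq) (rule gsc)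
    have "f (sc (of_real r) v) = of_real (g (sc (of_real r) v)) - \<i> * of_real (g (sc \<i> (sc (of_real r) v)))"
      by (simp only: f_def)
    also have "\<dots> = of_real (r * g v) - \<i> * of_real (r * g (sc \<i> v))" by (simp only: gsc e1)
    also have "\<dots> = of_real r * f v" by (simp add: f_def algebra_simps)
    finally show ?thesis .
  qed
  have fi: "f (sc \<i> v) = \<i> * f v" for v
  proof -
    have eq: "sc \<i> (sc \<i> v) = sc (of_real (-1)) v" by simp
    have gii: "g (sc \<i> (sc \<i> v)) = - g v" by (subst eq) (rule trans[OF gsc], simp)
    have "f (sc \<i> v) = of_real (g (sc \<i> v)) - \<i> * of_real (g (sc \<i> (sc \<i> v)))"
      by (simp only: f_def)
    also have "\<dots> = of_real (g (sc \<i> v)) + \<i> * of_real (g v)" by (simp only: gii of_real_minus) simp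
    also have "\<dots> = \<i> * f v" by (simp add: f_def algebra_simps)
    finally show ?thesis .
  qed
  have fsc: "f (sc c v) = c * f v" for c v
  proof -
    have "c = of_real (Re c) + of_real (Im c) * \<i>" by (simp add: complex_eq_iff)
    then have dec: "sc c v = sc (of_real (Re c)) v + sc (of_real (Im c)) (sc \<i> v)"
      by (metis V.scale_left_distrib V.scale_scale)
    have "f (sc c v) = f (sc (of_real (Re c)) v + sc (of_real (Im c)) (sc \<i> v))"
      using dec by (rule arg_cong)
    also have "\<dots> = f (sc (of_real (Re c)) v) + f (sc (of_real (Im c)) (sc \<i> v))" by (rule fadd)
    also have "\<dots> = of_real (Re c) * f v + of_real (Im c) * (\<i> * f v)" by (simp only: fr fi)
    finally have "f (sc c v) = of_real (Re c) * f v + of_real (Im c) * (\<i> * f v)" .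
    also have "\<dots> = (of_real (Re c) + of_real (Im c) * \<i>) * f v" by (simp add: algebra_simps)
    finally show ?thesis using \<open>c = _\<close> by simp
  qed
  have lin: "Vector_Spaces.linear sc (*) f" unfolding Vector_Spaces.linear_iff
    by (intro conjI allI vs fadd fsc) (unfold_locales, auto simp: algebra_simps)
  have fx: "f x \<noteq> 0"
  proof
    assume "f x = 0"
    then have "Re (f x) = 0" by simp
    then show False using g(2) unfolding f_def by simp
  qed
  have "continuous_map (elc_topology F) euclidean f"
  proof (rule elc_cont[OF \<rho>(1), of f 2])
    show "f (z - y) = f z - f y" for z y by (metis add_diff_cancel diff_add_cancel fadd)
    show "norm (f w) \<le> 2 * enn2real (\<rho> w)" if w: "\<rho> w \<noteq> top" for w
    proof -
      have ri: "\<rho> (sc \<i> w) = \<rho> w" using hc by simp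
      have "norm (f w) \<le> norm (complex_of_real (g w)) + norm (\<i> * complex_of_real (g (sc \<i> w)))"
        unfolding f_def by (rule norm_triangle_ineq4)
      also have "\<dots> = \<bar>g w\<bar> + \<bar>g (sc \<i> w)\<bar>" by (simp add: norm_mult)
      also have "\<dots> \<le> enn2real (\<rho> w) + enn2real (\<rho> w)" using g(3) w ri by (metis add_mono)
      finally show ?thesis by simp
    qed
  qed simp
  then show ?thesis using lin fx by blast
qed




theorem corollary3p10:
  fixes x :: "'v::ab_group_add"
  shows
   "(\<forall>(sc :: real \<Rightarrow> 'v \<Rightarrow> 'v) F.
       ext_lcs sc F \<longrightarrow> Hausdorff_space (elc_topology F) \<longrightarrow> x \<noteq> 0 \<longrightarrow>
       (\<exists>f :: 'v \<Rightarrow> real. Vector_Spaces.linear sc (*) f \<and>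
           continuous_map (elc_topology F) euclidean f \<and> f x \<noteq> 0)) \<and>
    (\<forall>(sc :: complex \<Rightarrow> 'v \<Rightarrow> 'v) F.
       ext_lcs sc F \<longrightarrow> Hausdorff_space (elc_topology F) \<longrightarrow> x \<noteq> 0 \<longrightarrow>
       (\<exists>f :: 'v \<Rightarrow> complex. Vector_Spaces.linear sc (*) f \<and>
           continuous_map (elc_topology F) euclidean f \<and> f x \<noteq> 0))"
    using real_part complex_part by blast

end
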